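(* For $\alpha\in[-1,1]$ let $\rho(\alpha)=\tfrac12(I+\alpha\sigma_z)=\mathrm{diag}\big(\tfrac{1+\alpha}{2},\tfrac{1-\alpha}{2}\big)$. For all $\alpha,\beta\in[-1,1]$, with $z_-=\min(\alpha,\beta)$, $z_+=\max(\alpha,\beta)$, the matrix $$\Pi(\alpha,\beta)=\frac12\begin{pmatrix}1+z_- & 0&0&\sqrt{(1+z_-)(1-z_+)}\\ 0&\max(\beta-\alpha,0)&0&0\\0&0&\max(\alpha-\beta,0)&0\\ \sqrt{(1+z_-)(1-z_+)}&0&0&1-z_+\end{pmatrix}$$ is an optimal coupling of $\rho(\alpha)$ and $\rho(\beta)$ for the cost $C_{\mathrm{symm},p}$, and $$D^p_{\mathrm{symm},p}(\rho(\alpha),\rho(\beta))=2^p\Big(1+\tfrac12|\alpha-\beta|-\sqrt{(1+\min(\alpha,\beta))(1-\max(\alpha,\beta))}\Big).$$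
   Context: Qubit setting: $\mathcal{H}=\mathbb{C}^2$, $\mathcal{H}^*$ is identified with $\mathbb{C}^2$ via the dual basis, and $A^T$ is the usual matrix transpose; operators on $\mathcal{H}\otimes\mathcal{H}^*$ are $4\times4$ matrices in the basis $e_1\otimes e_1^*,e_1\otimes e_2^*,e_2\otimes e_1^*,e_2\otimes e_2^*$. Pauli matrices: $\sigma_1=\sigma_x=\begin{pmatrix}0&1\\1&0\end{pmatrix}$, $\sigma_2=\sigma_y=\begin{pmatrix}0&-i\\i&0\end{pmatrix}$, $\sigma_3=\sigma_z=\begin{pmatrix}1&0\\0&-1\end{pmatrix}$. The set of couplings of states $\rho,\omega$ is $\mathcal{C}(\rho,\omega)=\{\Pi\in\mathcal{S}(\mathcal{H}\otimes\mathcal{H}^* ):\mathrm{tr}_{\mathcal{H}^*}[\Pi]=\omega,\ \mathrm{tr}_{\mathcal{H}}[\Pi]=\rho^T\}$. For $p\ge1$, $C_{\mathrm{symm},p}=\sum_{k=1}^3|\sigma_k\otimes I^T-I\otimes\sigma_k^T|^p$, which equals the matrix $\begin{pmatrix}2^p&0&0&-2^p\\0&2^{p+1}&0&0\\0&0&2^{p+1}&0\\-2^p&0&0&2^p\end{pmatrix}$, and $D_{\mathrm{symm},p}(\rho,\omega)=\big(\min_{\Pi\in\mathcal{C}(\rho,\omega)}\mathrm{tr}[\Pi C_{\mathrm{symm},p}]\big)^{1/p}$. *)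

theory Defs
  imports "HOL-Analysis.Analysis"
begin

text \<open>Matrices are functions nat => nat => complex; only entries with indices
  below the dimension are relevant. Operators on H (x) H* are 4x4 matrices,
  basis index of e_i (x) e_j^* (i,j in {0,1}) is 2*i+j.\<close>

type_synonym cmat = "nat \<Rightarrow> nat \<Rightarrow> complex"

definition mat_of_list :: "complex list list \<Rightarrow> cmat" where
  "mat_of_list xs i j = xs ! i ! j"

definition is_state :: "nat \<Rightarrow> cmat \<Rightarrow> bool" where
  "is_state n A \<longleftrightarrow>
     (\<forall>i<n. \<forall>j<n. A j i = cnj (A i j)) \<and>
     (\<forall>v :: nat \<Rightarrow> complex. 0 \<le> Re (\<Sum>i<n. \<Sum>j<n. cnj (v i) * A i j * v j)) \<and>
     (\<Sum>i<n. A i i) = 1"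

definition transp2 :: "cmat \<Rightarrow> cmat" where
  "transp2 A i j = A j i"

definition ptrace_Hstar :: "cmat \<Rightarrow> cmat" where
  "ptrace_Hstar P i k = (\<Sum>j<2. P (2*i+j) (2*k+j))"

definition ptrace_H :: "cmat \<Rightarrow> cmat" where
  "ptrace_H P j l = (\<Sum>i<2. P (2*i+j) (2*i+l))"

definition mat_eq :: "nat \<Rightarrow> cmat \<Rightarrow> cmat \<Rightarrow> bool" where
  "mat_eq n A B \<longleftrightarrow> (\<forall>i<n. \<forall>j<n. A i j = B i j)"

definition couplings :: "cmat \<Rightarrow> cmat \<Rightarrow> cmat set" where
  "couplings \<rho> \<omega> = {P. is_state 4 P \<and> mat_eq 2 (ptrace_Hstar P) \<omega>
                                   \<and> mat_eq 2 (ptrace_H P) (transp2 \<rho>)}"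

definition C_symm :: "real \<Rightarrow> cmat" where
  "C_symm p = mat_of_list
     [[of_real (2 powr p), 0, 0, - of_real (2 powr p)],
      [0, of_real (2 powr (p+1)), 0, 0],
      [0, 0, of_real (2 powr (p+1)), 0],
      [- of_real (2 powr p), 0, 0, of_real (2 powr p)]]"

text \<open>tr[P C] (real for Hermitian P, C).\<close>
definition cost :: "cmat \<Rightarrow> cmat \<Rightarrow> real" where
  "cost P C = Re (\<Sum>i<4. \<Sum>j<4. P i j * C j i)"

definition D_symm :: "real \<Rightarrow> cmat \<Rightarrow> cmat \<Rightarrow> real" where
  "D_symm p \<rho> \<omega> = (Inf ((\<lambda>P. cost P (C_symm p)) ` couplings \<rho> \<omega>)) powr (1 / p)"

definition rho_z :: "real \<Rightarrow> cmat" where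
  "rho_z a = mat_of_list [[of_real ((1 + a) / 2), 0], [0, of_real ((1 - a) / 2)]]"

definition Pi_opt :: "real \<Rightarrow> real \<Rightarrow> cmat" where
  "Pi_opt a b = (let zm = min a b; zp = max a b; s = sqrt ((1 + zm) * (1 - zp)) in
     mat_of_list
       [[of_real ((1 + zm) / 2), 0, 0, of_real (s / 2)],
        [0, of_real (max (b - a) 0 / 2), 0, 0],
        [0, 0, of_real (max (a - b) 0 / 2), 0],
        [of_real (s / 2), 0, 0, of_real ((1 - zp) / 2)]])"

end

theory Submission
  imports Defs
begin

lemma sum4: "(\<Sum>i<(4::nat). f i) = f 0 + f 1 + f 2 + f 3"
  by (simp add: eval_nat_numeral)

lemma sum2: "(\<Sum>i<(2::nat). f i) = f 0 + f 1"
  by (simp add: eval_nat_numeral)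

lemma all4: "(\<forall>i<(4::nat). P i) = (P 0 \<and> P 1 \<and> P 2 \<and> P 3)"
  by (auto simp: eval_nat_numeral less_Suc_eq)

lemma all2: "(\<forall>i<(2::nat). P i) = (P 0 \<and> P 1)"
  by (auto simp: eval_nat_numeral less_Suc_eq)

lemma cross_bound:
  fixes u t R :: real
  assumes u: "u \<ge> 0" and t: "t \<ge> 0"
    and q: "\<And>c d. 0 \<le> c^2 * u + d^2 * t - 2 * c * d * R"
  shows "R \<le> sqrt (u * t)"
proof (cases "R \<le> 0")
  case True then show ?thesis by (meson order.trans real_sqrt_ge_zero u t mult_nonneg_nonneg)
next
  case False
  have "R^2 \<le> u * t"
  proof (cases "u = 0")
    case True
    have "0 \<le> (t / R^2 + 1)^2 * R^2 * u + 1 * t - 2 * ((t / R^2 + 1) * R) * 1 * R"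
      using q[of "(t / R^2 + 1) * R" 1] by (simp add: power_mult_distrib)
    also have "\<dots> = - t - 2 * R^2" using True False by (simp add: field_simps power2_eq_square)
    finally show ?thesis using t False by (simp add: power2_eq_square) (smt (verit) mult_pos_pos)
  next
    case False
    have "0 \<le> R^2 * u + u^2 * t - 2 * R * u * R" using q[of R u] by simp
    hence "0 \<le> u * (u * t - R^2)" by (simp add: algebra_simps power2_eq_square)
    then show ?thesis using False u by (simp add: zero_le_mult_iff)
  qed
  then show ?thesis using False by (meson real_le_rsqrt)
qed

lemma cost_expand:
  "cost P (C_symm p) = 2 powr p * (Re (P 0 0) + Re (P 3 3) - Re (P 0 3) - Re (P 3 0))
     + 2 * 2 powr p * (Re (P 1 1) + Re (P 2 2))"
proof -
  have e: "(2::real) powr (p+1) = 2 * 2 powr p" by (simp add: powr_add)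
  show ?thesis
  unfolding cost_def C_symm_def mat_of_list_def sum4
  apply (simp add: e)
  by (simp add: algebra_simps)
qed

lemma hermD:
  assumes "is_state n P" "i < n" "j < n"
  shows  "P j i = cnj (P i j)" using assms(1)[unfolded is_state_def, THEN conjunct1] assms(2,3)
  by blast

lemma psdD:
  assumes "is_state n P"
  shows "0 \<le> Re (\<Sum>i<n. \<Sum>j<n. cnj (v i) * P i j * v j)"
  using assms[unfolded is_state_def, THEN conjunct2, THEN conjunct1] by (rule spec)

lemma diag_nonneg:
  assumes "is_state 4 P" "k < (4::nat)"
  shows "0 \<le> Re (P k k)"
proof -
  have "0 \<le> Re (\<Sum>i<4. \<Sum>j<4. cnj ((\<lambda>i. if i = k then 1 else 0) i) * P i j * (\<lambda>i. if i = k then 1 else 0) j)"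
    by (rule psdD[OF assms(1)])
  also have "\<dots> = Re (P k k)" using assms(2)
    unfolding sum4 by (auto simp: less_Suc_eq eval_nat_numeral)
  finally show ?thesis .
qed

lemma cross_nonneg:
  assumes "is_state 4 P"
  shows "0 \<le> c^2 * Re (P 0 0) + d^2 * Re (P 3 3) - 2 * c * d * Re (P 0 3)"
proof -
  let ?v = "\<lambda>i::nat. if i = 0 then complex_of_real c else if i = 3 then - complex_of_real d else 0"
  have h: "P 3 0 = cnj (P 0 3)" using hermD[OF assms, of 0 3] by simp
  have "0 \<le> Re (\<Sum>i<4. \<Sum>j<4. cnj (?v i) * P i j * ?v j)"
    by (rule psdD[OF assms(1)])
  also have "\<dots> = c^2 * Re (P 0 0) + d^2 * Re (P 3 3) - 2 * c * d * Re (P 0 3)"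
    unfolding sum4 apply simp using h by (simp add: power2_eq_square algebra_simps)
  finally show ?thesis .
qed

lemma key_quad:
  fixes x y h A B C D :: real
  assumes "x \<ge> 0" "y \<ge> 0" "h \<ge> 0" "h^2 = x * y"
  shows "0 \<le> x * (A^2 + B^2) + y * (C^2 + D^2) + 2 * h * (A * C + B * D)"
proof (cases "x = 0")
  case True
  then have "h = 0" using assms by simp
  then show ?thesis using True assms by simp
next
  case False
  have "x * (x * (A^2 + B^2) + y * (C^2 + D^2) + 2 * h * (A * C + B * D))
      = (x * A + h * C)^2 + (x * B + h * D)^2"
    using assms(4) by (simp add: power2_eq_square algebra_simps)
  also have "\<dots> \<ge> 0" by simp
  finally show ?thesis using False assms(1) by (simp add: zero_le_mult_iff)
qed

lemma psd_block:
  fixes x y h w1 w2 :: real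
  assumes "x \<ge> 0" "y \<ge> 0" "h \<ge> 0" "h^2 = x * y" "w1 \<ge> 0" "w2 \<ge> 0"
  shows "0 \<le> Re (\<Sum>i<4. \<Sum>j<4. cnj (v i) * mat_of_list
       [[of_real x, 0, 0, of_real h],
        [0, of_real w1, 0, 0],
        [0, 0, of_real w2, 0],
        [of_real h, 0, 0, of_real y]] i j * v j)"
proof -
  have k: "0 \<le> x * ((Re (v 0))^2 + (Im (v 0))^2) + y * ((Re (v 3))^2 + (Im (v 3))^2)
     + 2 * h * (Re (v 0) * Re (v 3) + Im (v 0) * Im (v 3))"
    by (rule key_quad) (use assms in auto)
  have n: "0 \<le> w1 * (Re (v 1))^2" "0 \<le> w1 * (Im (v 1))^2"
     "0 \<le> w2 * (Re (v 2))^2" "0 \<le> w2 * (Im (v 2))^2" using assms by auto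
  show ?thesis
  unfolding sum4 mat_of_list_def apply simp
  using k n by (simp add: power2_eq_square algebra_simps)
qed

lemma Pi_opt_state:
  fixes a b :: real
  assumes "a \<in> {-1..1}" and "b \<in> {-1..1}"
  shows "Pi_opt a b \<in> couplings (rho_z a) (rho_z b)"
proof -
  define zm where "zm = min a b"
  define zp where "zp = max a b"
  define s where "s = sqrt ((1 + zm) * (1 - zp))"
  have Pe: "Pi_opt a b = mat_of_list
       [[of_real ((1 + zm) / 2), 0, 0, of_real (s / 2)],
        [0, of_real (max (b - a) 0 / 2), 0, 0],
        [0, 0, of_real (max (a - b) 0 / 2), 0],
        [of_real (s / 2), 0, 0, of_real ((1 - zp) / 2)]]"
    unfolding Pi_opt_def Let_def zm_def zp_def s_def by simp
  have x0: "(1 + zm) / 2 \<ge> 0" and y0: "(1 - zp) / 2 \<ge> 0"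
    using assms unfolding zm_def zp_def by auto
  have h2: "(s / 2)^2 = (1 + zm) / 2 * ((1 - zp) / 2)"
    unfolding s_def using x0 y0 by (simp add: power_divide)
  have st: "is_state 4 (Pi_opt a b)"
    unfolding is_state_def
  proof (intro conjI)
    show "\<forall>i<4. \<forall>j<4. Pi_opt a b j i = cnj (Pi_opt a b i j)"
      unfolding Pe all4 mat_of_list_def by simp
    show "\<forall>v. 0 \<le> Re (\<Sum>i<4. \<Sum>j<4. cnj (v i) * Pi_opt a b i j * v j)"
    proof
      fix v :: "nat \<Rightarrow> complex"
      show "0 \<le> Re (\<Sum>i<4. \<Sum>j<4. cnj (v i) * Pi_opt a b i j * v j)"
        unfolding Pe by (rule psd_block) (use x0 y0 h2 in \<open>auto simp: s_def\<close>)
    qed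
  next
    show "(\<Sum>i<4. Pi_opt a b i i) = 1"
      unfolding Pe sum4 mat_of_list_def zm_def zp_def
      by (simp add: complex_eq_iff max_def min_def field_simps)
  qed
  have m1: "mat_eq 2 (ptrace_Hstar (Pi_opt a b)) (rho_z b)"
    unfolding mat_eq_def all2 ptrace_Hstar_def sum2 Pe rho_z_def mat_of_list_def zm_def zp_def
    by (simp add: complex_eq_iff max_def min_def field_simps)
  have m2: "mat_eq 2 (ptrace_H (Pi_opt a b)) (transp2 (rho_z a))"
    unfolding mat_eq_def all2 ptrace_H_def sum2 Pe rho_z_def mat_of_list_def zm_def zp_def transp2_def
    by (simp add: complex_eq_iff max_def min_def field_simps)
  show ?thesis unfolding couplings_def using st m1 m2 by blast
qed

lemma Pi_opt_cost:
  fixes a b :: real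
  shows "cost (Pi_opt a b) (C_symm p) = 2 powr p * (1 + \<bar>a - b\<bar> / 2 - sqrt ((1 + min a b) * (1 - max a b)))"
  unfolding cost_expand Pi_opt_def Let_def mat_of_list_def
  by (simp add: max_def min_def field_simps abs_if)

lemma lin1: "S \<le> 1 \<Longrightarrow> 0 \<le> (A::real) \<Longrightarrow> 0 \<le> 1 + A / 2 - S"
  by linarith

lemma lin2:
  fixes R q r S A u v w t b :: real
  assumes "R \<le> q" "q \<le> r" "S = 2 * r" "A / 2 \<le> v + w" "u + v = (1 + b) / 2" "w + t = (1 - b) / 2"
  shows "1 + A / 2 - S \<le> u + t - 2 * R + 2 * (v + w)"
proof -
  have "u + v + w + t = 1" using assms(5,6) by (simp add: field_simps)
  hence "u + t - 2 * R + 2 * (v + w) = 1 + (v + w) - 2 * R" by (simp add: algebra_simps)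
  moreover have "2 * R \<le> S" using assms(1-3) by simp
  ultimately show ?thesis using assms(4) by simp
qed

lemma Pi_opt_min:
  fixes a b :: real
  assumes "a \<in> {-1..1}" and "b \<in> {-1..1}" and "P \<in> couplings (rho_z a) (rho_z b)"
  shows "cost (Pi_opt a b) (C_symm p) \<le> cost P (C_symm p)"
proof -
  have st: "is_state 4 P" and m1: "mat_eq 2 (ptrace_Hstar P) (rho_z b)"
    and m2: "mat_eq 2 (ptrace_H P) (transp2 (rho_z a))"
    using assms(3) unfolding couplings_def by auto
  define u where "u = Re (P 0 0)"
  define v where "v = Re (P 1 1)"
  define w where "w = Re (P 2 2)"
  define t where "t = Re (P 3 3)"
  define R where "R = Re (P 0 3)"
  have e1: "u + v = (1 + b) / 2"
    using m1 unfolding mat_eq_def all2 ptrace_Hstar_def sum2 rho_z_def mat_of_list_def u_def v_def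
    by (simp add: complex_eq_iff)
  have e2: "w + t = (1 - b) / 2"
    using m1 unfolding mat_eq_def all2 ptrace_Hstar_def sum2 rho_z_def mat_of_list_def w_def t_def
    by (simp add: complex_eq_iff)
  have e3: "u + w = (1 + a) / 2"
    using m2 unfolding mat_eq_def all2 ptrace_H_def sum2 rho_z_def mat_of_list_def u_def w_def transp2_def
    by (simp add: complex_eq_iff)
  have e4: "v + t = (1 - a) / 2"
    using m2 unfolding mat_eq_def all2 ptrace_H_def sum2 rho_z_def mat_of_list_def v_def t_def transp2_def
    by (simp add: complex_eq_iff)
  have u0: "u \<ge> 0" unfolding u_def by (rule diag_nonneg[OF st]) simp
  have v0: "v \<ge> 0" unfolding v_def by (rule diag_nonneg[OF st]) simp
  have w0: "w \<ge> 0" unfolding w_def by (rule diag_nonneg[OF st]) simp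
  have t0: "t \<ge> 0" unfolding t_def by (rule diag_nonneg[OF st]) simp
  have RR: "R \<le> sqrt (u * t)"
    by (rule cross_bound[OF u0 t0]) (use cross_nonneg[OF st] in \<open>simp add: u_def t_def R_def\<close>)
  have h30: "Re (P 3 0) = R" using hermD[OF st, of 0 3] by (simp add: R_def)
  have cP: "cost P (C_symm p) = 2 powr p * (u + t - 2 * R + 2 * (v + w))"
    unfolding cost_expand h30 by (simp add: u_def v_def w_def t_def R_def algebra_simps)
  define x where "x = (1 + min a b) / 2"
  define y where "y = (1 - max a b) / 2"
  have ux: "u \<le> x" unfolding x_def using e1 e3 v0 w0 by (auto simp: min_def)
  have ty: "t \<le> y" unfolding y_def using e2 e4 v0 w0 by (auto simp: max_def)
  have "sqrt (u * t) \<le> sqrt (x * y)"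
    by (rule real_sqrt_le_mono, rule mult_mono) (use ux ty u0 t0 in auto)
  moreover have "sqrt ((1 + min a b) * (1 - max a b)) = 2 * sqrt (x * y)"
  proof -
    have "(1 + min a b) * (1 - max a b) = 4 * (x * y)" unfolding x_def y_def by simp
    then show ?thesis by (simp add: real_sqrt_mult)
  qed
  moreover have "v + w \<ge> \<bar>a - b\<bar> / 2" using e1 e3 ux unfolding x_def by (cases "a \<le> b") (auto simp: min_def abs_if)
  ultimately have le: "1 + \<bar>a - b\<bar> / 2 - sqrt ((1 + min a b) * (1 - max a b)) \<le> u + t - 2 * R + 2 * (v + w)"
    by (rule lin2[OF RR]) (use e1 e2 \<open>sqrt (u * t) \<le> sqrt (x * y)\<close> \<open>sqrt ((1 + min a b) * (1 - max a b)) = 2 * sqrt (x * y)\<close> \<open>v + w \<ge> \<bar>a - b\<bar> / 2\<close> in auto)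
  show ?thesis unfolding cP Pi_opt_cost
    by (rule mult_left_mono[OF le]) simp
qed

theorem proposition3p1:
  fixes a b p :: real
  assumes "a \<in> {-1..1}" and "b \<in> {-1..1}" and "1 \<le> p"
  shows "Pi_opt a b \<in> couplings (rho_z a) (rho_z b)
    \<and> (\<forall>P \<in> couplings (rho_z a) (rho_z b). cost (Pi_opt a b) (C_symm p) \<le> cost P (C_symm p))
    \<and> D_symm p (rho_z a) (rho_z b) powr p
        = 2 powr p * (1 + \<bar>a - b\<bar> / 2 - sqrt ((1 + min a b) * (1 - max a b)))"
proof (intro conjI ballI)
  show mem: "Pi_opt a b \<in> couplings (rho_z a) (rho_z b)" by (rule Pi_opt_state[OF assms(1,2)])
  show opt: "\<And>P. P \<in> couplings (rho_z a) (rho_z b) \<Longrightarrow> cost (Pi_opt a b) (C_symm p) \<le> cost P (C_symm p)"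
    by (rule Pi_opt_min[OF assms(1,2)])
  have inf: "Inf ((\<lambda>P. cost P (C_symm p)) ` couplings (rho_z a) (rho_z b)) = cost (Pi_opt a b) (C_symm p)"
    by (rule cInf_eq_minimum) (use mem opt in auto)
  have prod: "(1 + min a b) * (1 - max a b) \<le> 1"
  proof -
    have "(1 + min a b) * (1 - max a b) \<le> (1 + max a b) * (1 - max a b)"
      by (rule mult_right_mono) (use assms in auto)
    also have "\<dots> = 1 - (max a b)^2" by (simp add: power2_eq_square algebra_simps)
    also have "\<dots> \<le> 1" by simp
    finally show ?thesis .
  qed
  have X0: "0 \<le> cost (Pi_opt a b) (C_symm p)"
  proof -
    have "sqrt ((1 + min a b) * (1 - max a b)) \<le> 1" using prod by (simp only: real_sqrt_le_1_iff)
    then have "0 \<le> 1 + \<bar>a - b\<bar> / 2 - sqrt ((1 + min a b) * (1 - max a b))"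
      by (rule lin1) (use \<open>sqrt ((1 + min a b) * (1 - max a b)) \<le> 1\<close> in auto)
    then show ?thesis unfolding Pi_opt_cost by simp
  qed
  show "D_symm p (rho_z a) (rho_z b) powr p
        = 2 powr p * (1 + \<bar>a - b\<bar> / 2 - sqrt ((1 + min a b) * (1 - max a b)))"
    unfolding D_symm_def inf using assms(3) X0
    by (simp add: powr_powr Pi_opt_cost[symmetric])
qed

end
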